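(* Let $G$ be a $2$-generated, simple, complete, torsion-free group in which every proper subgroup is infinite cyclic. Then every maximal cyclic subgroup $Z$ of $G$ is malnormal (i.e. $Z\cap g^{-1}Zg=1$ for all $g\in G\setminus Z$), and $G$ has the unique root property.
   Context: A group is complete if it has trivial center and no outer automorphisms. A group has the unique root property if for all $x,y$ in it and every positive integer $n$, $x^n=y^n$ implies $x=y$. *)

theory Defs
  imports "HOL-Algebra.Algebra"
begin

definition group_center :: "('a, 'b) monoid_scheme \<Rightarrow> 'a set" where
  "group_center G = {z \<in> carrier G. \<forall>x \<in> carrier G. z \<otimes>\<^bsub>G\<^esub> x = x \<otimes>\<^bsub>G\<^esub> z}"

definition inner_aut :: "('a, 'b) monoid_scheme \<Rightarrow> 'a \<Rightarrow> 'a \<Rightarrow> 'a" where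
  "inner_aut G g = (\<lambda>x \<in> carrier G. g \<otimes>\<^bsub>G\<^esub> x \<otimes>\<^bsub>G\<^esub> inv\<^bsub>G\<^esub> g)"

definition complete_group :: "('a, 'b) monoid_scheme \<Rightarrow> bool" where
  "complete_group G \<longleftrightarrow> group_center G = {\<one>\<^bsub>G\<^esub>} \<and>
     (\<forall>\<phi> \<in> auto G. \<exists>g \<in> carrier G. \<phi> = inner_aut G g)"

text \<open>Simple: nontrivial, and the only normal subgroups are trivial and whole group
  (the library locale simple_group uses order G > 1, which fails for infinite groups).\<close>
definition simple_grp :: "('a, 'b) monoid_scheme \<Rightarrow> bool" where
  "simple_grp G \<longleftrightarrow> carrier G \<noteq> {\<one>\<^bsub>G\<^esub>} \<and>
     (\<forall>H. H \<lhd> G \<longrightarrow> H = carrier G \<or> H = {\<one>\<^bsub>G\<^esub>})"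

definition torsion_free :: "('a, 'b) monoid_scheme \<Rightarrow> bool" where
  "torsion_free G \<longleftrightarrow>
     (\<forall>x \<in> carrier G. \<forall>n::nat. n > 0 \<longrightarrow> x [^]\<^bsub>G\<^esub> n = \<one>\<^bsub>G\<^esub> \<longrightarrow> x = \<one>\<^bsub>G\<^esub>)"

definition two_generated :: "('a, 'b) monoid_scheme \<Rightarrow> bool" where
  "two_generated G \<longleftrightarrow> (\<exists>a \<in> carrier G. \<exists>b \<in> carrier G. generate G {a, b} = carrier G)"

definition cyclic_subgroup :: "('a, 'b) monoid_scheme \<Rightarrow> 'a set \<Rightarrow> bool" where
  "cyclic_subgroup G H \<longleftrightarrow> subgroup H G \<and> cyclic_group (subgroup_generated G H)"

definition maximal_cyclic_subgroup :: "('a, 'b) monoid_scheme \<Rightarrow> 'a set \<Rightarrow> bool" where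
  "maximal_cyclic_subgroup G Z \<longleftrightarrow> cyclic_subgroup G Z \<and>
     (\<forall>Z'. cyclic_subgroup G Z' \<and> Z \<subseteq> Z' \<longrightarrow> Z' = Z)"

definition malnormal :: "('a, 'b) monoid_scheme \<Rightarrow> 'a set \<Rightarrow> bool" where
  "malnormal G Z \<longleftrightarrow> (\<forall>g \<in> carrier G - Z.
     Z \<inter> {inv\<^bsub>G\<^esub> g \<otimes>\<^bsub>G\<^esub> z \<otimes>\<^bsub>G\<^esub> g | z. z \<in> Z} = {\<one>\<^bsub>G\<^esub>})"

definition unique_root_property :: "('a, 'b) monoid_scheme \<Rightarrow> bool" where
  "unique_root_property G \<longleftrightarrow> (\<forall>x \<in> carrier G. \<forall>y \<in> carrier G. \<forall>n::nat. n > 0 \<longrightarrow>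
     x [^]\<^bsub>G\<^esub> n = y [^]\<^bsub>G\<^esub> n \<longrightarrow> x = y)"

end

theory Submission
  imports Defs
begin

lemma cyc_comm:
  assumes "group G" "cyclic_subgroup G H" "x \<in> H" "y \<in> H"
  shows "x \<otimes>\<^bsub>G\<^esub> y = y \<otimes>\<^bsub>G\<^esub> x"
proof -
  have sg: "subgroup H G" "cyclic_group (subgroup_generated G H)"
    using assms(2) by (auto simp: cyclic_subgroup_def)
  interpret group G by fact
  have gr: "group (subgroup_generated G H)" by (rule group_subgroup_generated)
  have "comm_group (subgroup_generated G H)"
    using group.cyclic_imp_abelian_group[OF gr sg(2)] .
  moreover have "carrier (subgroup_generated G H) = H"
    using subgroup.carrier_subgroup_generated_subgroup[OF sg(1)] by simp
  ultimately show ?thesis using assms(3,4)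
    by (metis comm_group.axioms(1) comm_monoid.m_comm mult_subgroup_generated)
qed

definition centr :: "('a, 'b) monoid_scheme \<Rightarrow> 'a \<Rightarrow> 'a set" where
  "centr G x = {y \<in> carrier G. y \<otimes>\<^bsub>G\<^esub> x = x \<otimes>\<^bsub>G\<^esub> y}"

lemma centr_subgroup:
  fixes G (structure)
  assumes "group G" "x \<in> carrier G"
  shows "subgroup (centr G x) G"
proof -
  interpret group G by fact
  show ?thesis
  proof (rule subgroupI)
    show "centr G x \<subseteq> carrier G" by (auto simp: centr_def)
    show "centr G x \<noteq> {}" using assms(2) by (auto simp: centr_def intro!: exI[of _ \<one>])
    fix a assume a: "a \<in> centr G x"
    hence ac: "a \<in> carrier G" and e: "a \<otimes> x = x \<otimes> a" by (auto simp: centr_def)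
    have "inv a \<otimes> x = x \<otimes> inv a"
    proof -
      have "inv a \<otimes> x = inv a \<otimes> (x \<otimes> a) \<otimes> inv a" using ac assms(2) by (simp add: m_assoc)
      also have "\<dots> = inv a \<otimes> (a \<otimes> x) \<otimes> inv a" using e by simp
      also have "\<dots> = x \<otimes> inv a" using ac assms(2) by (simp add: m_assoc[symmetric])
      finally show ?thesis .
    qed
    thus "inv a \<in> centr G x" using ac by (auto simp: centr_def)
    fix b assume b: "b \<in> centr G x"
    hence bc: "b \<in> carrier G" and f: "b \<otimes> x = x \<otimes> b" by (auto simp: centr_def)
    have "a \<otimes> b \<otimes> x = x \<otimes> (a \<otimes> b)"
      using ac bc assms(2) e f by (metis m_assoc)
    thus "a \<otimes> b \<in> centr G x" using ac bc by (auto simp: centr_def)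
  qed
qed

theorem lemma5p3:
  fixes G (structure)
  assumes "group G"
    and "two_generated G"
    and "simple_grp G"
    and "complete_group G"
    and "torsion_free G"
    and "\<And>H. \<lbrakk>subgroup H G; H \<noteq> carrier G; H \<noteq> {\<one>}\<rbrakk> \<Longrightarrow>
            cyclic_subgroup G H \<and> infinite H"
  shows "(\<forall>Z. maximal_cyclic_subgroup G Z \<longrightarrow> malnormal G Z) \<and> unique_root_property G"
proof -
  interpret group G by fact
  have canc[simp]: "g \<otimes> (inv g \<otimes> a) = a" "inv g \<otimes> (g \<otimes> a) = a"
    if "g \<in> carrier G" "a \<in> carrier G" for g a
    using that by (simp_all add: m_assoc[symmetric])
  have cen: "group_center G = {\<one>}" using assms(4) by (simp add: complete_group_def)
  have ntriv: "carrier G \<noteq> {\<one>}" using assms(3) by (simp add: simple_grp_def)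
  have ccyc: "cyclic_subgroup G (centr G x)" if x: "x \<in> carrier G" "x \<noteq> \<one>" for x
  proof -
    have sg: "subgroup (centr G x) G" by (rule centr_subgroup[OF assms(1) x(1)])
    have "x \<in> centr G x" using x by (auto simp: centr_def)
    hence "centr G x \<noteq> {\<one>}" using x by auto
    moreover have "centr G x \<noteq> carrier G"
    proof
      assume "centr G x = carrier G"
      hence "\<forall>y\<in>carrier G. y \<otimes> x = x \<otimes> y" unfolding centr_def by blast
      hence "x \<in> group_center G" using x unfolding group_center_def by auto
      thus False using cen x by auto
    qed
    ultimately show ?thesis using assms(6) sg by blast
  qed
  have G_not_cyc: "\<not> cyclic_subgroup G (carrier G)"
  proof
    assume c: "cyclic_subgroup G (carrier G)"
    have "group_center G = carrier G"
      using cyc_comm[OF assms(1) c] by (auto simp: group_center_def)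
    thus False using cen ntriv by simp
  qed
  have part1: "malnormal G Z" if mz: "maximal_cyclic_subgroup G Z" for Z
  proof -
    have cz: "cyclic_subgroup G Z" and mx: "\<And>Z'. cyclic_subgroup G Z' \<Longrightarrow> Z \<subseteq> Z' \<Longrightarrow> Z' = Z"
      using mz by (auto simp: maximal_cyclic_subgroup_def)
    have sz: "subgroup Z G" using cz by (simp add: cyclic_subgroup_def)
    have Zc: "Z \<subseteq> carrier G" using sz subgroup.subset by blast
    have CZ: "centr G z = Z" if "z \<in> Z" "z \<noteq> \<one>" for z
    proof -
      have "Z \<subseteq> centr G z" using that Zc cyc_comm[OF assms(1) cz] by (auto simp: centr_def)
      thus ?thesis using mx ccyc that Zc by blast
    qed
    show ?thesis unfolding malnormal_def
    proof (intro ballI)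
      fix g assume g: "g \<in> carrier G - Z"
      hence gc: "g \<in> carrier G" and gZ: "g \<notin> Z" by auto
      show "Z \<inter> {inv g \<otimes> z \<otimes> g |z. z \<in> Z} = {\<one>}"
      proof (rule ccontr)
        assume ne: "Z \<inter> {inv g \<otimes> z \<otimes> g |z. z \<in> Z} \<noteq> {\<one>}"
        have "\<one> \<in> Z \<inter> {inv g \<otimes> z \<otimes> g |z. z \<in> Z}"
          using sz gc subgroup.one_closed[OF sz] by (auto intro!: exI[of _ \<one>])
        then obtain x z where xZ: "x \<in> Z" and zZ: "z \<in> Z" and xe: "x = inv g \<otimes> z \<otimes> g" and x1: "x \<noteq> \<one>"
          using ne by blast
        have zc: "z \<in> carrier G" "x \<in> carrier G" using zZ xZ Zc by auto
        have zx: "z = g \<otimes> x \<otimes> inv g" using xe gc zc by (simp add: m_assoc[symmetric]) (simp add: m_assoc)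
        have z1: "z \<noteq> \<one>" using xe x1 gc by auto
        have Cx: "centr G x = Z" using CZ xZ x1 by blast
        have Cz: "centr G z = Z" using CZ zZ z1 by blast
        have inc1: "inv g \<otimes> w \<otimes> g \<in> Z" if "w \<in> Z" for w
        proof -
          have wc: "w \<in> carrier G" using that Zc by auto
          have "w \<otimes> z = z \<otimes> w" using cyc_comm[OF assms(1) cz that zZ] .
          hence "inv g \<otimes> w \<otimes> g \<otimes> x = x \<otimes> (inv g \<otimes> w \<otimes> g)"
            using xe gc wc zc by (simp add: m_assoc) (simp add: m_assoc[symmetric])
          hence "inv g \<otimes> w \<otimes> g \<in> centr G x" using gc wc by (auto simp: centr_def)
          thus ?thesis using Cx by simp
        qed
        have inc2: "g \<otimes> w \<otimes> inv g \<in> Z" if "w \<in> Z" for w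
        proof -
          have wc: "w \<in> carrier G" using that Zc by auto
          have "w \<otimes> x = x \<otimes> w" using cyc_comm[OF assms(1) cz that xZ] .
          hence "g \<otimes> w \<otimes> inv g \<otimes> z = z \<otimes> (g \<otimes> w \<otimes> inv g)"
            using zx gc wc zc by (simp add: m_assoc) (simp add: m_assoc[symmetric])
          hence "g \<otimes> w \<otimes> inv g \<in> centr G z" using gc wc by (auto simp: centr_def)
          thus ?thesis using Cz by simp
        qed
        define N where "N = {h \<in> carrier G. \<forall>w\<in>Z. h \<otimes> w \<otimes> inv h \<in> Z \<and> inv h \<otimes> w \<otimes> h \<in> Z}"
        have sN: "subgroup N G"
        proof (rule subgroupI)
          show "N \<subseteq> carrier G" by (auto simp: N_def)
          show "N \<noteq> {}" using Zc by (auto simp: N_def intro!: exI[of _ \<one>])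
          fix a assume "a \<in> N"
          thus "inv a \<in> N" by (auto simp: N_def)
          fix b assume "b \<in> N"
          show "a \<otimes> b \<in> N" unfolding N_def
          proof (intro CollectI conjI ballI)
            show abc: "a \<otimes> b \<in> carrier G" using \<open>a \<in> N\<close> \<open>b \<in> N\<close> by (auto simp: N_def)
            fix w assume w: "w \<in> Z"
            have ac: "a \<in> carrier G" and bc: "b \<in> carrier G" using \<open>a \<in> N\<close> \<open>b \<in> N\<close> by (auto simp: N_def)
            have wc: "w \<in> carrier G" using w Zc by auto
            have "b \<otimes> w \<otimes> inv b \<in> Z" using \<open>b \<in> N\<close> w by (auto simp: N_def)
            hence "a \<otimes> (b \<otimes> w \<otimes> inv b) \<otimes> inv a \<in> Z" using \<open>a \<in> N\<close> by (auto simp: N_def)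
            thus "a \<otimes> b \<otimes> w \<otimes> inv (a \<otimes> b) \<in> Z" using ac bc wc by (simp add: inv_mult_group m_assoc)
            have "inv a \<otimes> w \<otimes> a \<in> Z" using \<open>a \<in> N\<close> w by (auto simp: N_def)
            hence "inv b \<otimes> (inv a \<otimes> w \<otimes> a) \<otimes> b \<in> Z" using \<open>b \<in> N\<close> by (auto simp: N_def)
            thus "inv (a \<otimes> b) \<otimes> w \<otimes> (a \<otimes> b) \<in> Z" using ac bc wc by (simp add: inv_mult_group m_assoc)
          qed
        qed
        have ZN: "Z \<subseteq> N"
        proof
          fix h assume h: "h \<in> Z"
          have hc: "h \<in> carrier G" using h Zc by auto
          { fix w assume w: "w \<in> Z"
            have wc: "w \<in> carrier G" using w Zc by auto
            have "h \<otimes> w = w \<otimes> h" using cyc_comm[OF assms(1) cz h w] .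
            hence "h \<otimes> w \<otimes> inv h = w" "inv h \<otimes> w \<otimes> h = w" using hc wc
              by (simp_all add: m_assoc) (metis inv_solve_left m_assoc m_closed)
            hence "h \<otimes> w \<otimes> inv h \<in> Z \<and> inv h \<otimes> w \<otimes> h \<in> Z" using w by simp }
          thus "h \<in> N" using hc by (auto simp: N_def)
        qed
        have gN: "g \<in> N" using gc inc1 inc2 by (auto simp: N_def)
        show False
        proof (cases "N = carrier G")
          case True
          have "Z \<lhd> G" unfolding normal_inv_iff
            using sz True inc2 ZN by (auto simp: N_def)
          hence "Z = carrier G \<or> Z = {\<one>}" using assms(3) by (simp add: simple_grp_def)
          thus False using G_not_cyc cz xZ x1 by auto
        next
          case False
          have "N \<noteq> {\<one>}" using ZN xZ x1 by auto
          hence "cyclic_subgroup G N" using assms(6) sN False by blast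
          hence "N = Z" using mx ZN by blast
          thus False using gN gZ by simp
        qed
      qed
    qed
  qed
  have part2: "unique_root_property G" unfolding unique_root_property_def
  proof (intro ballI allI impI)
    fix x y and n :: nat assume x: "x \<in> carrier G" and y: "y \<in> carrier G" and n: "n > 0"
      and e: "x [^] n = y [^] n"
    have tf: "\<And>u. u \<in> carrier G \<Longrightarrow> u [^] n = \<one> \<Longrightarrow> u = \<one>"
      using assms(5) n by (auto simp: torsion_free_def)
    show "x = y"
    proof (cases "x [^] n = \<one>")
      case True
      then show ?thesis using tf x y e by metis
    next
      case False
      let ?z = "x [^] n"
      have zc: "?z \<in> carrier G" using x by simp
      have cC: "cyclic_subgroup G (centr G ?z)" using ccyc zc False by blast
      have "x \<in> centr G ?z" using x by (auto simp: centr_def pow_mult_distrib nat_pow_Suc2[symmetric] nat_pow_Suc)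
      moreover have "y \<in> centr G ?z" using y e
        by (auto simp: centr_def nat_pow_Suc2[symmetric] nat_pow_Suc)
      ultimately have com: "x \<otimes> y = y \<otimes> x" using cyc_comm[OF assms(1) cC] by blast
      have "x \<otimes> inv y \<in> carrier G" using x y by simp
      have com2: "x \<otimes> inv y = inv y \<otimes> x" using com x y
        by (metis inv_comm inv_mult_group m_assoc m_closed inv_closed r_inv r_one l_inv l_one)
      have "(x \<otimes> inv y) [^] n = x [^] n \<otimes> inv y [^] n"
        using pow_mult_distrib[OF com2 x] y by simp
      also have "\<dots> = \<one>" using e x y by (simp add: nat_pow_inv)
      finally have "x \<otimes> inv y = \<one>" using tf x y by simp
      thus ?thesis using x y by (metis inv_equality inv_inv r_inv_ex r_inv inv_closed)
    qed
  qed
  show ?thesis using part1 part2 by blast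
qed

end
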